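(* Let $m$ and $n$ be powers of $2$ with $m \ge 16$, $n \ge 4$ and $m \le 4n$, and let $$G = G(m,n) := \langle a, b \mid a^m = 1,\ b^n = 1,\ [b,a] = a^4 \rangle.$$ Let $N = \langle a^4 \rangle$. Then: - $N$ is a characteristic subgroup of $G$; - $G/N$ is abelian; - there is no automorphism $\alpha$ of $G$ whose induced automorphism on $G/N$ is the inversion map $gN \mapsto g^{-1}N$.
   Context: Commutators are $[x,y] = x^{-1}y^{-1}xy$. *)

theory Defs
  imports "HOL-Algebra.Algebra"
begin

text \<open>Group presentations, built from scratch (no free groups in the library).
A word is a list of letters (g, e): generator g, with e = True meaning the inverse g^-1.\<close>

definition inv_letter :: "'g \<times> bool \<Rightarrow> 'g \<times> bool" where
  "inv_letter l = (fst l, \<not> snd l)"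

inductive pres_eq :: "('g \<times> bool) list set \<Rightarrow> ('g \<times> bool) list \<Rightarrow> ('g \<times> bool) list \<Rightarrow> bool"
  for R where
  refl: "pres_eq R w w"
| sym: "pres_eq R u v \<Longrightarrow> pres_eq R v u"
| trans: "pres_eq R u v \<Longrightarrow> pres_eq R v w \<Longrightarrow> pres_eq R u w"
| ctx: "pres_eq R u v \<Longrightarrow> pres_eq R (x @ u @ y) (x @ v @ y)"
| cancel: "pres_eq R [l, inv_letter l] []"
| rel: "r \<in> R \<Longrightarrow> pres_eq R r []"

definition presented_group :: "('g \<times> bool) list set \<Rightarrow> ('g \<times> bool) list set monoid" where
  "presented_group R =
     \<lparr> carrier = UNIV // {(u, v). pres_eq R u v},
       monoid.mult = (\<lambda>A B. {w. \<exists>u\<in>A. \<exists>v\<in>B. pres_eq R w (u @ v)}),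
       one = {w. pres_eq R w []} \<rparr>"

definition word_class :: "('g \<times> bool) list set \<Rightarrow> ('g \<times> bool) list \<Rightarrow> ('g \<times> bool) list set" where
  "word_class R w = {u. pres_eq R u w}"

text \<open>G(m,n) = < a, b | a^m = 1, b^n = 1, [b,a] = a^4 >, with [x,y] = x^-1 y^-1 x y.
Generator a is False, b is True. The relator for [b,a] = a^4 is b^-1 a^-1 b a a^-4.\<close>
definition relators_Gmn :: "nat \<Rightarrow> nat \<Rightarrow> (bool \<times> bool) list set" where
  "relators_Gmn m n =
     { replicate m (False, False),
       replicate n (True, False),
       [(True, True), (False, True), (True, False), (False, False)] @ replicate 4 (False, True) }"

definition Gmn :: "nat \<Rightarrow> nat \<Rightarrow> (bool \<times> bool) list set monoid" where
  "Gmn m n = presented_group (relators_Gmn m n)"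

definition gen_a :: "nat \<Rightarrow> nat \<Rightarrow> (bool \<times> bool) list set" where
  "gen_a m n = word_class (relators_Gmn m n) [(False, False)]"

definition gen_b :: "nat \<Rightarrow> nat \<Rightarrow> (bool \<times> bool) list set" where
  "gen_b m n = word_class (relators_Gmn m n) [(True, False)]"

end

theory Submission
  imports Defs
begin

lemma pe_sym: "pres_eq R u v \<Longrightarrow> pres_eq R v u" by (rule pres_eq.sym)

lemma pe_append: "pres_eq R u u' \<Longrightarrow> pres_eq R v v' \<Longrightarrow> pres_eq R (u@v) (u'@v')"
proof -
  assume "pres_eq R u u'" "pres_eq R v v'"
  have "pres_eq R ([] @ u @ v) ([] @ u' @ v)" by (rule pres_eq.ctx) fact
  moreover have "pres_eq R (u' @ v @ []) (u' @ v' @ [])" by (rule pres_eq.ctx) fact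
  ultimately show ?thesis by (auto intro: pres_eq.trans)
qed

lemma wc_eq_iff: "word_class R u = word_class R v \<longleftrightarrow> pres_eq R u v"
  unfolding word_class_def
  by (auto intro: pres_eq.refl pres_eq.sym pres_eq.trans)

lemma carrier_pg: "carrier (presented_group R) = range (word_class R)"
  unfolding presented_group_def word_class_def quotient_def
  by (auto intro: pres_eq.sym)

lemma wc_carrier[simp]: "word_class R u \<in> carrier (presented_group R)"
  by (simp add: carrier_pg)

lemma mult_pg[simp]: "word_class R u \<otimes>\<^bsub>presented_group R\<^esub> word_class R v = word_class R (u @ v)"
  unfolding presented_group_def word_class_def
  by (auto intro: pres_eq.refl pres_eq.trans pe_append)

lemma one_pg: "\<one>\<^bsub>presented_group R\<^esub> = word_class R []"
  unfolding presented_group_def word_class_def by simp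

definition winv :: "('g \<times> bool) list \<Rightarrow> ('g \<times> bool) list" where
  "winv w = rev (map inv_letter w)"

lemma winv_cancel: "pres_eq R (winv w @ w) []"
proof (induction w)
  case Nil show ?case by (simp add: winv_def pres_eq.refl)
next
  case (Cons l w)
  have c: "pres_eq R [inv_letter l, l] []"
    using pres_eq.cancel[of R "inv_letter l"] by (simp add: inv_letter_def)
  have "pres_eq R (winv w @ [inv_letter l, l] @ w) (winv w @ [] @ w)"
    by (rule pres_eq.ctx) (rule c)
  then have "pres_eq R (winv (l # w) @ l # w) (winv w @ w)" by (simp add: winv_def)
  then show ?case using Cons.IH by (rule pres_eq.trans)
qed

lemma group_pg: "group (presented_group R)"
proof (rule groupI)
  fix x y assume "x \<in> carrier (presented_group R)" "y \<in> carrier (presented_group R)"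
  then show "x \<otimes>\<^bsub>presented_group R\<^esub> y \<in> carrier (presented_group R)"
    by (auto simp: carrier_pg)
next
  show "\<one>\<^bsub>presented_group R\<^esub> \<in> carrier (presented_group R)" by (simp add: one_pg)
next
  fix x y z assume "x \<in> carrier (presented_group R)" "y \<in> carrier (presented_group R)"
    "z \<in> carrier (presented_group R)"
  then show "x \<otimes>\<^bsub>presented_group R\<^esub> y \<otimes>\<^bsub>presented_group R\<^esub> z =
    x \<otimes>\<^bsub>presented_group R\<^esub> (y \<otimes>\<^bsub>presented_group R\<^esub> z)"
    by (auto simp: carrier_pg)
next
  fix x assume "x \<in> carrier (presented_group R)"
  then show "\<one>\<^bsub>presented_group R\<^esub> \<otimes>\<^bsub>presented_group R\<^esub> x = x"
    by (auto simp: carrier_pg one_pg)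
next
  fix x assume "x \<in> carrier (presented_group R)"
  then obtain w where w: "x = word_class R w" by (auto simp: carrier_pg)
  show "\<exists>y\<in>carrier (presented_group R). y \<otimes>\<^bsub>presented_group R\<^esub> x = \<one>\<^bsub>presented_group R\<^esub>"
    by (rule bexI[of _ "word_class R (winv w)"]) (simp_all add: w one_pg wc_eq_iff winv_cancel)
qed

lemma pow_pg: "word_class R [l] [^]\<^bsub>presented_group R\<^esub> (k::nat) = word_class R (replicate k l)"
  by (induction k) (simp_all add: one_pg replicate_append_same[symmetric])

lemma inv_pg: "inv\<^bsub>presented_group R\<^esub> (word_class R [l]) = word_class R [inv_letter l]"
proof -
  interpret group "presented_group R" by (rule group_pg)
  have "word_class R [inv_letter l] \<otimes>\<^bsub>presented_group R\<^esub> word_class R [l] = \<one>\<^bsub>presented_group R\<^esub>"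
    using winv_cancel[of R "[l]"] by (simp add: one_pg wc_eq_iff winv_def)
  then show ?thesis by (simp add: inv_equality)
qed

lemma cons_pg: "word_class R (l # w) = word_class R [l] \<otimes>\<^bsub>presented_group R\<^esub> word_class R w"
  by simp

lemma pg_induct:
  assumes "x \<in> carrier (presented_group R)"
    and "P \<one>\<^bsub>presented_group R\<^esub>"
    and "\<And>l y. y \<in> carrier (presented_group R) \<Longrightarrow> P y \<Longrightarrow> P (word_class R [l] \<otimes>\<^bsub>presented_group R\<^esub> y)"
  shows "P x"
proof -
  obtain w where w: "x = word_class R w" using assms(1) by (auto simp: carrier_pg)
  have "P (word_class R w)"
  proof (induction w)
    case Nil then show ?case using assms(2) by (simp add: one_pg)
  next
    case (Cons l w) then show ?case using assms(3)[of "word_class R w" l] by simp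
  qed
  then show ?thesis by (simp add: w)
qed

fun letter :: "bool \<times> bool \<Rightarrow> int \<Rightarrow> int" where
  "letter (False, False) t = (t + 1) mod 16"
| "letter (False, True) t = (t - 1) mod 16"
| "letter (True, False) t = (5 * t) mod 16"
| "letter (True, True) t = (13 * t) mod 16"

definition act :: "(bool \<times> bool) list \<Rightarrow> int \<Rightarrow> int" where
  "act w t = foldr letter w t"

lemma cases16: "(t::int) \<in> {0..<16} \<Longrightarrow> t = 0 \<or> t = 1 \<or> t = 2 \<or> t = 3 \<or> t = 4 \<or> t = 5 \<or> t = 6 \<or> t = 7 \<or>
   t = 8 \<or> t = 9 \<or> t = 10 \<or> t = 11 \<or> t = 12 \<or> t = 13 \<or> t = 14 \<or> t = 15"
  by (simp add: atLeastLessThan_iff) presburger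

lemma letter_range: "letter l t \<in> {0..<16}"
proof (cases l)
  case (Pair x y) then show ?thesis by (cases x; cases y) auto
qed

lemma act_range: "t \<in> {0..<16} \<Longrightarrow> act w t \<in> {0..<16}"
  using letter_range by (cases w) (auto simp: act_def)

lemma act_append: "act (u @ v) t = act u (act v t)"
  by (simp add: act_def)

lemma act_rep_a: "t \<in> {0..<16} \<Longrightarrow> act (replicate k (False, False)) t = (t + int k) mod 16"
proof (induction k)
  case 0 then show ?case by (simp add: act_def)
next
  case (Suc k)
  then have "act (replicate (Suc k) (False, False)) t = ((t + int k) mod 16 + 1) mod 16"
    by (simp add: act_def)
  also have "\<dots> = (t + int (Suc k)) mod 16" using mod_add_left_eq[of "t + int k" 16 1] by (simp add: ac_simps)
  finally show ?case .
qed

lemma act_rep_b: "t \<in> {0..<16} \<Longrightarrow> act (replicate k (True, False)) t = (5 ^ k * t) mod 16"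
proof (induction k)
  case 0 then show ?case by (simp add: act_def)
next
  case (Suc k)
  then have "act (replicate (Suc k) (True, False)) t = (5 * ((5 ^ k * t) mod 16)) mod 16"
    by (simp add: act_def)
  also have "\<dots> = (5 ^ Suc k * t) mod 16" by (simp add: mod_mult_right_eq mult.assoc)
  finally show ?case .
qed

lemma pe_act:
  assumes m: "16 dvd m" and n: "4 dvd n"
  shows "pres_eq (relators_Gmn m n) u v \<Longrightarrow> \<forall>t\<in>{0..<16}. act u t = act v t"
proof (induction rule: pres_eq.induct)
  case (refl w) then show ?case by simp
next
  case (sym u v) then show ?case by simp
next
  case (trans u v w) then show ?case by simp
next
  case (ctx u v x y)
  show ?case
  proof
    fix t :: int assume "t \<in> {0..<16}"
    then have "act y t \<in> {0..<16}" by (rule act_range)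
    then show "act (x @ u @ y) t = act (x @ v @ y) t" using ctx.IH by (simp add: act_append)
  qed
next
  case (cancel l)
  show ?case
  proof
    fix t :: int assume t: "t \<in> {0..<16}"
    obtain p q where l: "l = (p, q)" by (cases l)
    show "act [l, inv_letter l] t = act [] t"
      using cases16[OF t] by (cases p; cases q) (auto simp: l inv_letter_def act_def)
  qed
next
  case (rel r)
  show ?case
  proof
    fix t :: int assume t: "t \<in> {0..<16}"
    from rel consider "r = replicate m (False, False)" | "r = replicate n (True, False)"
      | "r = [(True, True), (False, True), (True, False), (False, False)] @ replicate 4 (False, True)"
      by (auto simp: relators_Gmn_def)
    then show "act r t = act [] t"
    proof cases
      case 1
      then have "act r t = (t + int m) mod 16" by (simp add: act_rep_a[OF t] 1)
      also have "\<dots> = t mod 16" using m by (auto elim!: dvdE)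
      also have "\<dots> = t" using t by simp
      finally show ?thesis by (simp add: act_def)
    next
      case 2
      obtain q where q: "n = 4 * q" using n by (auto elim!: dvdE)
      have "(5::int) ^ n mod 16 = 625 ^ q mod 16" by (simp add: q power_mult)
      also have "\<dots> = (625 mod 16) ^ q mod 16" by (metis power_mod)
      also have "\<dots> = 1" by simp
      finally have "(5::int) ^ n mod 16 = 1" .
      then have "act r t = (5 ^ n * t) mod 16" by (simp add: act_rep_b[OF t] 2)
      also have "\<dots> = ((5 ^ n mod 16) * t) mod 16" by (simp add: mod_mult_left_eq)
      also have "\<dots> = t" using t \<open>(5::int) ^ n mod 16 = 1\<close> by simp
      finally show ?thesis by (simp add: act_def)
    next
      case 3
      have r: "r = [(True, True), (False, True), (True, False), (False, False), (False, True), (False, True), (False, True), (False, True)]"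
        by (simp add: 3 numeral_eq_Suc)
      show ?thesis using cases16[OF t] unfolding r act_def by (elim disjE) simp_all
    qed
  qed
qed

locale gmn = group G for G :: "(bool \<times> bool) list set monoid" (structure) +
  fixes m n :: nat and a b N
  assumes G_eq: "G = Gmn m n" and a_eq: "a = gen_a m n" and b_eq: "b = gen_b m n"
    and m16: "16 dvd m" and n4: "4 dvd n" and n_pos: "0 < n"
    and N_eq: "N = generate G {a [^] (4::nat)}"
begin

lemma a_c[simp]: "a \<in> carrier G" by (simp add: G_eq a_eq gen_a_def Gmn_def)
lemma b_c[simp]: "b \<in> carrier G" by (simp add: G_eq b_eq gen_b_def Gmn_def)

lemma r1: "a [^] m = \<one>"
  unfolding G_eq a_eq gen_a_def Gmn_def
  by (simp add: pow_pg one_pg wc_eq_iff pres_eq.rel relators_Gmn_def)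

lemma r2: "b [^] n = \<one>"
  unfolding G_eq b_eq gen_b_def Gmn_def
  by (simp add: pow_pg one_pg wc_eq_iff pres_eq.rel relators_Gmn_def)

lemma r3: "inv b \<otimes> inv a \<otimes> b \<otimes> a = a [^] (4::nat)"
proof -
  have "inv b \<otimes> inv a \<otimes> b \<otimes> a \<otimes> (inv a) [^] (4::nat) = \<one>"
    unfolding G_eq a_eq b_eq gen_a_def gen_b_def Gmn_def
    by (simp add: pow_pg inv_pg one_pg wc_eq_iff inv_letter_def relators_Gmn_def pres_eq.rel)
  then have "inv ((inv a) [^] (4::nat)) = inv b \<otimes> inv a \<otimes> b \<otimes> a"
    by (intro inv_equality) auto
  then show ?thesis by (simp add: nat_pow_inv)
qed

lemma eNF: "x \<in> carrier G \<Longrightarrow> P \<one> \<Longrightarrow>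
  (\<And>y. y \<in> carrier G \<Longrightarrow> P y \<Longrightarrow> P (a \<otimes> y) \<and> P (inv a \<otimes> y) \<and> P (b \<otimes> y) \<and> P (inv b \<otimes> y)) \<Longrightarrow> P x"
proof -
  assume x: "x \<in> carrier G" and P1: "P \<one>" and St: "\<And>y. y \<in> carrier G \<Longrightarrow> P y \<Longrightarrow> P (a \<otimes> y) \<and> P (inv a \<otimes> y) \<and> P (b \<otimes> y) \<and> P (inv b \<otimes> y)"
  have gens: "word_class (relators_Gmn m n) [l] \<in> {a, inv a, b, inv b}" for l
  proof -
    obtain p q where l: "l = (p, q)" by (cases l)
    show ?thesis unfolding G_eq a_eq b_eq gen_a_def gen_b_def Gmn_def
      by (cases p; cases q) (auto simp: l inv_pg inv_letter_def)
  qed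
  show ?thesis
  proof (rule pg_induct[of x "relators_Gmn m n" P])
    show "x \<in> carrier (presented_group (relators_Gmn m n))" using x by (simp add: G_eq Gmn_def)
    show "P \<one>\<^bsub>presented_group (relators_Gmn m n)\<^esub>" using P1 by (simp add: G_eq Gmn_def)
    fix l y assume "y \<in> carrier (presented_group (relators_Gmn m n))" "P y"
    then show "P (word_class (relators_Gmn m n) [l] \<otimes>\<^bsub>presented_group (relators_Gmn m n)\<^esub> y)"
      using gens[of l] St[of y] by (auto simp: G_eq Gmn_def)
  qed
qed

end

context gmn begin

lemma pA: "a [^] (i::int) \<otimes> a [^] (j::int) = a [^] (i + j)"
  by (simp add: int_pow_mult)

lemma pA': "a [^] (i::int) \<otimes> (a [^] (j::int) \<otimes> z) = a [^] (i + j) \<otimes> z" if "z \<in> carrier G"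
  using that by (simp add: int_pow_mult m_assoc)

lemma invA: "inv (a [^] (i::int)) = a [^] (- i)"
  by (simp add: int_pow_neg)

lemma L1: "a \<otimes> b = b \<otimes> a [^] (-3::int)"
proof -
  have "a [^] (4::int) = (inv b \<otimes> inv a \<otimes> b) \<otimes> a"
    using r3 by (metis int_pow_int of_nat_numeral)
  then have h: "inv b \<otimes> inv a \<otimes> b = a [^] (4::int) \<otimes> inv a"
    by (simp add: inv_solve_right)
  have "a [^] (4::int) \<otimes> inv a = a [^] (3::int)"
    using pA[of 4 "-1"] by (simp add: int_pow_neg)
  with h have "inv (inv b \<otimes> inv a \<otimes> b) = a [^] (-3::int)" by (simp add: invA)
  then have "inv b \<otimes> (a \<otimes> b) = a [^] (-3::int)" by (simp add: inv_mult_group m_assoc)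
  then have "a [^] (-3::int) = inv b \<otimes> (a \<otimes> b)" by (simp add: m_assoc)
  then show ?thesis using inv_solve_left[of "a [^] (-3::int)" b "a \<otimes> b"] by simp
qed

lemma conj_inv: "x \<in> carrier G \<Longrightarrow> y \<in> carrier G \<Longrightarrow> z \<in> carrier G \<Longrightarrow> x \<otimes> z = z \<otimes> y \<Longrightarrow> inv x \<otimes> z = z \<otimes> inv y"
  by (metis inv_solve_left inv_solve_right m_assoc inv_closed m_closed)

lemma L2nat: "a [^] (k::nat) \<otimes> b = b \<otimes> a [^] (-3 * int k)"
proof (induction k)
  case 0 then show ?case by simp
next
  case (Suc k)
  have "a [^] Suc k \<otimes> b = a [^] k \<otimes> (a \<otimes> b)" by (simp add: nat_pow_Suc m_assoc)
  also have "\<dots> = (a [^] k \<otimes> b) \<otimes> a [^] (-3::int)" by (simp add: L1 m_assoc)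
  also have "\<dots> = b \<otimes> (a [^] (-3 * int k) \<otimes> a [^] (-3::int))" by (simp add: Suc m_assoc)
  also have "\<dots> = b \<otimes> a [^] (-3 * int (Suc k))" by (simp add: pA algebra_simps)
  finally show ?case .
qed

lemma L2: "a [^] (i::int) \<otimes> b = b \<otimes> a [^] (-3 * i)"
proof (cases "i \<ge> 0")
  case True
  then obtain k where "i = int k" using nonneg_eq_int by blast
  then show ?thesis using L2nat[of k] by (simp add: int_pow_int)
next
  case False
  define k where "k = nat (- i)"
  have k: "i = - int k" using False by (simp add: k_def)
  have "inv (a [^] k) \<otimes> b = b \<otimes> inv (a [^] (-3 * int k))"
    by (rule conj_inv) (simp_all add: L2nat)
  then show ?thesis by (simp add: k int_pow_neg_int invA)
qed

lemma L3: "a [^] (i::int) \<otimes> b [^] (j::nat) = b [^] j \<otimes> a [^] (i * (-3) ^ j)"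
proof (induction j)
  case 0 then show ?case by simp
next
  case (Suc j)
  have "a [^] i \<otimes> b [^] Suc j = (a [^] i \<otimes> b [^] j) \<otimes> b" by (simp add: nat_pow_Suc m_assoc)
  also have "\<dots> = b [^] j \<otimes> (a [^] (i * (-3) ^ j) \<otimes> b)" by (simp add: Suc m_assoc)
  also have "\<dots> = b [^] Suc j \<otimes> a [^] (i * (-3) ^ Suc j)" by (simp add: L2 nat_pow_Suc m_assoc algebra_simps)
  finally show ?case .
qed

lemma invb: "inv b = b [^] (n - 1)"
proof -
  have "n = Suc (n - 1)" using n_pos by simp
  then have "b [^] (n - 1) \<otimes> b = b [^] n" by (metis nat_pow_Suc)
  then show ?thesis using r2 by (intro inv_equality) simp_all
qed

lemma NF: assumes "x \<in> carrier G" shows "\<exists>j::nat. \<exists>i::int. x = b [^] j \<otimes> a [^] i"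
proof (rule eNF[where P="\<lambda>x. \<exists>j::nat. \<exists>i::int. x = b [^] j \<otimes> a [^] i", OF assms])
  show "\<exists>j::nat. \<exists>i::int. \<one> = b [^] j \<otimes> a [^] i"
    by (rule exI[of _ 0], rule exI[of _ 0]) simp
next
  fix y assume "y \<in> carrier G" "\<exists>j::nat. \<exists>i::int. y = b [^] j \<otimes> a [^] i"
  then obtain j :: nat and i :: int where y: "y = b [^] j \<otimes> a [^] i" by blast
  have A: "a [^] (e::int) \<otimes> y = b [^] j \<otimes> a [^] (e * (-3) ^ j + i)" for e
  proof -
    have "a [^] e \<otimes> y = (a [^] e \<otimes> b [^] j) \<otimes> a [^] i" by (simp add: y m_assoc)
    also have "\<dots> = b [^] j \<otimes> (a [^] (e * (-3) ^ j) \<otimes> a [^] i)" by (simp add: L3 m_assoc)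
    also have "\<dots> = b [^] j \<otimes> a [^] (e * (-3) ^ j + i)" by (simp add: pA)
    finally show ?thesis .
  qed
  have f1: "a \<otimes> y = b [^] j \<otimes> a [^] (1 * (-3) ^ j + i)" using A[of 1] by simp
  have f2: "inv a \<otimes> y = b [^] j \<otimes> a [^] ((-1) * (-3) ^ j + i)"
    using A[of "-1"] by (simp add: int_pow_neg)
  have f3: "b \<otimes> y = b [^] Suc j \<otimes> a [^] i"
  proof -
    have "b [^] Suc j = b \<otimes> b [^] j" by (rule nat_pow_Suc2) simp
    then show ?thesis by (simp add: y m_assoc)
  qed
  have f4: "inv b \<otimes> y = b [^] (n - 1 + j) \<otimes> a [^] i"
  proof -
    have "b [^] (n - 1 + j) = b [^] (n - 1) \<otimes> b [^] j" by (rule nat_pow_mult[symmetric]) simp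
    then show ?thesis unfolding y invb by (simp add: m_assoc)
  qed
  show "(\<exists>j::nat. \<exists>i::int. a \<otimes> y = b [^] j \<otimes> a [^] i) \<and>
    (\<exists>j::nat. \<exists>i::int. inv a \<otimes> y = b [^] j \<otimes> a [^] i) \<and>
    (\<exists>j::nat. \<exists>i::int. b \<otimes> y = b [^] j \<otimes> a [^] i) \<and>
    (\<exists>j::nat. \<exists>i::int. inv b \<otimes> y = b [^] j \<otimes> a [^] i)"
    by (intro conjI exI; rule f1 f2 f3 f4)
qed

end

context gmn begin

lemma dvd4: "(4::int) dvd ((-3) ^ k - 1)"
proof (induction k)
  case 0 then show ?case by simp
next
  case (Suc k)
  have "(-3::int) ^ Suc k - 1 = (-3) * ((-3) ^ k - 1) - 4" by simp
  then show ?case using Suc by (metis dvd_diff dvd_mult dvd_refl)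
qed

lemma prodNF: fixes j k :: nat and i l :: int shows "(b [^] j \<otimes> a [^] i) \<otimes> (b [^] k \<otimes> a [^] l) = b [^] (j + k) \<otimes> a [^] (i * (-3) ^ k + l)"
proof -
  have "(b [^] j \<otimes> a [^] i) \<otimes> (b [^] k \<otimes> a [^] l) = b [^] j \<otimes> ((a [^] i \<otimes> b [^] k) \<otimes> a [^] l)"
    by (simp add: m_assoc)
  also have "\<dots> = b [^] j \<otimes> (b [^] k \<otimes> (a [^] (i * (-3) ^ k) \<otimes> a [^] l))"
    by (simp add: L3 m_assoc)
  also have "\<dots> = (b [^] j \<otimes> b [^] k) \<otimes> a [^] (i * (-3) ^ k + l)"
    by (simp add: pA m_assoc)
  also have "\<dots> = b [^] (j + k) \<otimes> a [^] (i * (-3) ^ k + l)"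
    by (simp add: nat_pow_mult)
  finally show ?thesis .
qed

lemma K: assumes "x \<in> carrier G" "y \<in> carrier G"
  shows "\<exists>t::int. x \<otimes> y = y \<otimes> x \<otimes> a [^] (4 * t)"
proof -
  obtain j :: nat and i :: int where x: "x = b [^] j \<otimes> a [^] i" using NF[OF assms(1)] by blast
  obtain k :: nat and l :: int where y: "y = b [^] k \<otimes> a [^] l" using NF[OF assms(2)] by blast
  have "4 dvd (i * ((-3) ^ k - 1) - l * ((-3) ^ j - 1))"
    by (intro dvd_diff dvd_mult dvd4)
  then obtain t where t: "i * ((-3) ^ k - 1) - l * ((-3) ^ j - 1) = 4 * t" by (elim dvdE) simp
  have "x \<otimes> y = b [^] (j + k) \<otimes> a [^] (i * (-3) ^ k + l)" by (simp add: x y prodNF)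
  also have "\<dots> = b [^] (k + j) \<otimes> (a [^] (l * (-3) ^ j + i) \<otimes> a [^] (4 * t))"
    using t by (simp add: pA add.commute algebra_simps)
  also have "\<dots> = y \<otimes> x \<otimes> a [^] (4 * t)" by (simp add: x y prodNF m_assoc)
  finally show ?thesis by blast
qed

lemma comm_in: assumes "x \<in> carrier G" "y \<in> carrier G"
  shows "\<exists>t::int. inv x \<otimes> inv y \<otimes> x \<otimes> y = a [^] (4 * t)"
proof -
  obtain t :: int where t: "x \<otimes> y = y \<otimes> x \<otimes> a [^] (4 * t)" using K[OF assms] by blast
  have "inv x \<otimes> inv y \<otimes> x \<otimes> y = inv x \<otimes> (inv y \<otimes> (x \<otimes> y))" using assms by (simp add: m_assoc)
  also have "\<dots> = inv x \<otimes> (inv y \<otimes> (y \<otimes> (x \<otimes> a [^] (4 * t))))" using assms by (simp add: t m_assoc)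
  also have "\<dots> = a [^] (4 * t)" using assms by (simp add: m_assoc[symmetric])
  finally show ?thesis by blast
qed

lemma mem_N: "h \<in> N \<longleftrightarrow> (\<exists>k::int. h = a [^] (4 * k))"
proof -
  have eq: "(a [^] (4::nat)) [^] (k::int) = a [^] (4 * k)" for k
    using int_pow_pow[of a 4 k] int_pow_int[of G a 4] by simp
  show ?thesis unfolding N_eq generate_pow[OF nat_pow_closed[OF a_c]] eq by auto
qed

lemma subN: "subgroup N G"
  unfolding N_eq by (rule generate_is_subgroup) simp

lemma conjN: fixes k :: int assumes "z \<in> carrier G" shows "\<exists>k'::int. a [^] (4 * k) \<otimes> z = z \<otimes> a [^] (4 * k')"
proof -
  obtain j :: nat and i :: int where z: "z = b [^] j \<otimes> a [^] i" using NF[OF assms] by blast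
  have "a [^] (4 * k) \<otimes> z = (a [^] (4 * k) \<otimes> b [^] j) \<otimes> a [^] i" by (simp add: z m_assoc)
  also have "\<dots> = b [^] j \<otimes> (a [^] (4 * k * (-3) ^ j) \<otimes> a [^] i)" by (simp add: L3 m_assoc)
  also have "\<dots> = b [^] j \<otimes> (a [^] i \<otimes> a [^] (4 * (k * (-3) ^ j)))" by (simp add: pA algebra_simps)
  also have "\<dots> = z \<otimes> a [^] (4 * (k * (-3) ^ j))" by (simp add: z m_assoc)
  finally show ?thesis by blast
qed

lemma normalN: "N \<lhd> G"
  unfolding normal_inv_iff
proof (intro conjI subN ballI)
  fix x h assume x: "x \<in> carrier G" and h: "h \<in> N"
  obtain k :: int where k: "h = a [^] (4 * k)" using h mem_N by blast
  obtain k' :: int where k': "a [^] (4 * k) \<otimes> inv x = inv x \<otimes> a [^] (4 * k')" using conjN[of "inv x" k] x by auto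
  have "x \<otimes> h \<otimes> inv x = x \<otimes> (a [^] (4 * k) \<otimes> inv x)" using x by (simp add: k m_assoc)
  also have "\<dots> = a [^] (4 * k')" using x by (simp add: k' m_assoc[symmetric])
  finally have "x \<otimes> h \<otimes> inv x = a [^] (4 * k')" .
  then show "x \<otimes> h \<otimes> inv x \<in> N" unfolding mem_N by (rule exI)
qed

end

context gmn begin
lemma commQ: "comm_group (G Mod N)"
proof -
  interpret normal N G by (rule normalN)
  have rc: "N #> (g \<otimes> h) = N #> g" if g: "g \<in> carrier G" and h: "h \<in> N" for g h
  proof -
    have hc: "h \<in> carrier G" by (rule subgroup.mem_carrier[OF subN h])
    have "g \<otimes> h \<otimes> inv g \<in> N" by (rule inv_op_closed2[OF g h])
    then have "g \<otimes> h \<in> N #> g"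
      by (rule subgroup.rcos_module_rev[OF subN is_group g monoid.m_closed[OF is_monoid g hc]])
    then have "N #> g = N #> (g \<otimes> h)" by (rule repr_independence[OF _ g subN])
    then show ?thesis by simp
  qed
  show ?thesis
  proof (rule group.group_comm_groupI[OF factorgroup_is_group])
    fix U V assume "U \<in> carrier (G Mod N)" "V \<in> carrier (G Mod N)"
    then obtain x y where x: "x \<in> carrier G" "U = N #> x" and y: "y \<in> carrier G" "V = N #> y"
      unfolding carrier_FactGroup by auto
    obtain t :: int where t: "x \<otimes> y = y \<otimes> x \<otimes> a [^] (4 * t)" using K[OF x(1) y(1)] by (elim exE)
    have "N #> (x \<otimes> y) = N #> (y \<otimes> x)"
      unfolding t
    proof (rule rc)
      show "y \<otimes> x \<in> carrier G" by (rule monoid.m_closed[OF is_monoid y(1) x(1)])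
      show "a [^] (4 * t) \<in> N" unfolding mem_N by auto
    qed
    then show "U \<otimes>\<^bsub>G Mod N\<^esub> V = V \<otimes>\<^bsub>G Mod N\<^esub> U"
      using x y by (simp add: rcos_sum)
  qed
qed
end

context gmn begin

lemma hom_N: assumes phi: "\<phi> \<in> hom G G" shows "\<phi> ` N \<subseteq> N"
proof
  interpret h: group_hom G G \<phi> using phi by (simp add: group_hom_def group_hom_axioms_def is_group)
  fix y assume "y \<in> \<phi> ` N"
  then obtain x where x: "x \<in> N" "y = \<phi> x" by (elim imageE)
  from x(1) obtain k :: int where k: "x = a [^] (4 * k)" unfolding mem_N by (elim exE)
  have c4: "a [^] (4::int) = inv b \<otimes> inv a \<otimes> b \<otimes> a"
    using r3 int_pow_int[of G a 4] by simp
  obtain t :: int where t: "inv (\<phi> b) \<otimes> inv (\<phi> a) \<otimes> \<phi> b \<otimes> \<phi> a = a [^] (4 * t)"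
    using comm_in[of "\<phi> b" "\<phi> a"] by (auto simp del: h.hom_inv)
  have "\<phi> (a [^] (4::int)) = a [^] (4 * t)" unfolding c4 using t by simp
  have "y = \<phi> ((a [^] (4::int)) [^] k)" using x k by (simp add: int_pow_pow)
  also have "\<dots> = (\<phi> (a [^] (4::int))) [^] k" by (simp add: h.hom_int_pow)
  also have "\<dots> = a [^] (4 * (t * k))" using \<open>\<phi> (a [^] (4::int)) = a [^] (4 * t)\<close>
    by (simp add: int_pow_pow mult.assoc)
  finally show "y \<in> N" unfolding mem_N by auto
qed

lemma char_N: assumes phi: "\<phi> \<in> iso G G" shows "\<phi> ` N = N"
proof
  show "\<phi> ` N \<subseteq> N" using phi by (intro hom_N) (simp add: iso_def)
  show "N \<subseteq> \<phi> ` N"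
  proof
    fix h assume h: "h \<in> N"
    let ?psi = "inv_into (carrier G) \<phi>"
    have psi: "?psi \<in> iso G G" by (rule iso_set_sym[OF phi])
    then have "?psi h \<in> N" using hom_N[of ?psi] h by (auto simp: iso_def)
    moreover have "h \<in> \<phi> ` carrier G"
      using phi subgroup.mem_carrier[OF subN h] by (auto simp: iso_def bij_betw_def)
    then have "\<phi> (?psi h) = h" by (rule f_inv_into_f)
    ultimately show "h \<in> \<phi> ` N" by (metis imageI)
  qed
qed

lemma ord_nat: "a [^] (e::nat) = \<one> \<Longrightarrow> int e mod 16 = 0"
proof -
  assume "a [^] e = \<one>"
  then have "pres_eq (relators_Gmn m n) (replicate e (False, False)) []"
    unfolding G_eq a_eq gen_a_def Gmn_def by (simp add: pow_pg one_pg wc_eq_iff)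
  then have "\<forall>t\<in>{0..<16}. act (replicate e (False, False)) t = act [] t"
    by (rule pe_act[OF m16 n4])
  then have "act (replicate e (False, False)) 0 = act [] 0" by simp
  moreover have "act (replicate e (False, False)) 0 = (0 + int e) mod 16" by (rule act_rep_a) simp
  moreover have "act [] 0 = 0" by (simp add: act_def)
  ultimately show ?thesis by simp
qed

lemma ord_int: "a [^] (E::int) = \<one> \<Longrightarrow> E mod 16 = 0"
proof (cases "E \<ge> 0")
  case True
  assume "a [^] E = \<one>"
  moreover have "a [^] E = a [^] (nat E)" using True int_pow_int[of G a "nat E"] by simp
  ultimately have "a [^] (nat E) = \<one>" by simp
  then have "int (nat E) mod 16 = 0" by (rule ord_nat)
  then show ?thesis using True by simp
next
  case False
  assume "a [^] E = \<one>"
  then have "a [^] (- E) = \<one>" by (simp add: int_pow_neg)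
  moreover have "a [^] (- E) = a [^] (nat (- E))" using False int_pow_int[of G a "nat (- E)"] by simp
  ultimately have "a [^] (nat (- E)) = \<one>" by simp
  then have "int (nat (- E)) mod 16 = 0" by (rule ord_nat)
  then have "(- E) mod 16 = 0" using False by simp
  then show ?thesis by presburger
qed

end

context gmn begin

lemma P_mod: "((-3::int) ^ (n - 1)) mod 16 = 5"
proof -
  obtain q where q: "n = 4 * q" using n4 by (elim dvdE)
  with n_pos have q1: "q \<ge> 1" by simp
  have "n - 1 = 4 * (q - 1) + 3" using q q1 by simp
  then have "(-3::int) ^ (n - 1) = 81 ^ (q - 1) * (-27)"
    by (simp add: power_add power_mult)
  moreover have x1: "(81::int) ^ (q - 1) mod 16 = 1"
  proof -
    have "(81::int) ^ (q - 1) mod 16 = (81 mod 16) ^ (q - 1) mod 16" by (metis power_mod)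
    then show ?thesis by simp
  qed
  moreover have "(81 ^ (q - 1) * (-27::int)) mod 16 = ((81 ^ (q - 1) mod 16) * (-27)) mod 16"
    by (rule mod_mult_left_eq[symmetric])
  ultimately show ?thesis by simp
qed

lemma noinv: "\<not> (\<exists>\<alpha>\<in>iso G G. \<forall>g\<in>carrier G. N #> \<alpha> g = N #> inv g)"
proof
  assume "\<exists>\<alpha>\<in>iso G G. \<forall>g\<in>carrier G. N #> \<alpha> g = N #> inv g"
  then obtain \<alpha> where iso: "\<alpha> \<in> iso G G" and cos: "\<forall>g\<in>carrier G. N #> \<alpha> g = N #> inv g"
    by (elim bexE)
  interpret h: group_hom G G \<alpha> using iso by (simp add: group_hom_def group_hom_axioms_def is_group iso_def)
  have key: "\<alpha> g \<otimes> g \<in> N" if g: "g \<in> carrier G" for g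
  proof -
    have "\<alpha> g \<in> N #> \<alpha> g" by (rule rcos_self[OF h.hom_closed[OF g] subN])
    then have "\<alpha> g \<in> N #> inv g" using cos g by simp
    then have "\<alpha> g \<otimes> inv (inv g) \<in> N"
      by (rule subgroup.rcos_module_imp[OF subN is_group inv_closed[OF g]])
    then show ?thesis using g by simp
  qed
  from key[OF a_c] obtain k :: int where k: "\<alpha> a \<otimes> a = a [^] (4 * k)" unfolding mem_N by (elim exE)
  from key[OF b_c] obtain u :: int where u: "\<alpha> b \<otimes> b = a [^] (4 * u)" unfolding mem_N by (elim exE)
  define s where "s = 4 * k - 1"
  define P where "P = (-3::int) ^ (n - 1)"
  have aa: "\<alpha> a = a [^] s"
  proof -
    have "\<alpha> a = a [^] (4 * k) \<otimes> inv a" using k inv_solve_right[of "\<alpha> a" "a [^] (4 * k)" a] by simp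
    also have "\<dots> = a [^] (4 * k) \<otimes> a [^] (-1::int)" by (simp add: int_pow_neg)
    also have "\<dots> = a [^] s" by (simp add: pA s_def)
    finally show ?thesis .
  qed
  have ab: "\<alpha> b = a [^] (4 * u) \<otimes> b [^] (n - 1)"
    using u inv_solve_right[of "\<alpha> b" "a [^] (4 * u)" b] by (simp add: invb)
  have bb: "b \<otimes> b [^] (n - 1) = \<one>"
  proof -
    have "n = Suc (n - 1)" using n_pos by simp
    then have "b [^] n = b \<otimes> b [^] (n - 1)" by (metis nat_pow_Suc2 b_c)
    then show ?thesis using r2 by simp
  qed
  have invab: "inv (\<alpha> b) = b \<otimes> a [^] (- (4 * u))"
  proof -
    have "inv (b [^] (n - 1)) = b" using invb by (metis inv_inv b_c)
    then show ?thesis by (simp add: ab inv_mult_group invA)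
  qed
  have "\<alpha> (inv b \<otimes> inv a \<otimes> b \<otimes> a) = inv (\<alpha> b) \<otimes> inv (\<alpha> a) \<otimes> \<alpha> b \<otimes> \<alpha> a" by simp
  also have "\<dots> = b \<otimes> (a [^] (- (4 * u)) \<otimes> (a [^] (- s) \<otimes> (a [^] (4 * u) \<otimes> (b [^] (n - 1) \<otimes> a [^] s))))"
    by (simp only: invab) (simp add: aa ab invA m_assoc)
  also have "\<dots> = b \<otimes> (a [^] (- s) \<otimes> b [^] (n - 1) \<otimes> a [^] s)"
    by (simp add: pA' m_assoc)
  also have "\<dots> = b \<otimes> (b [^] (n - 1) \<otimes> a [^] (- s * P) \<otimes> a [^] s)"
    by (simp add: L3 P_def)
  also have "\<dots> = (b \<otimes> b [^] (n - 1)) \<otimes> (a [^] (- s * P) \<otimes> a [^] s)"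
    by (simp add: m_assoc)
  also have "\<dots> = a [^] (- s * P + s)" unfolding bb by (simp add: pA)
  finally have lhs: "\<alpha> (inv b \<otimes> inv a \<otimes> b \<otimes> a) = a [^] (- s * P + s)" .
  have rhs: "\<alpha> (a [^] (4::nat)) = a [^] (4 * s)"
  proof -
    have "\<alpha> (a [^] (4::nat)) = (a [^] s) [^] (4::nat)" by (simp add: h.hom_nat_pow aa)
    also have "\<dots> = (a [^] s) [^] (int 4)" by (rule int_pow_int[symmetric])
    also have "\<dots> = a [^] (4 * s)" by (simp add: int_pow_pow mult.commute)
    finally show ?thesis .
  qed
  have "a [^] (- s * P + s) = a [^] (4 * s)" using lhs rhs r3 by simp
  moreover have "a [^] ((- s * P + s) - 4 * s) = a [^] (- s * P + s) \<otimes> inv (a [^] (4 * s))"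
    by (rule int_pow_diff) simp
  ultimately have "a [^] ((- s * P + s) - 4 * s) = \<one>" by simp
  then have m0: "((- s * P + s) - 4 * s) mod 16 = 0" by (rule ord_int)
  obtain r where r: "P = 16 * r + 5" using P_mod unfolding P_def[symmetric]
    by (metis div_mult_mod_eq mult.commute)
  have e: "(- s * P + s) - 4 * s = 8 + 16 * (- r * s - 2 * k)" by (simp add: r s_def algebra_simps)
  have "\<And>w::int. (8 + 16 * w) mod 16 = 8" by presburger
  then have "((- s * P + s) - 4 * s) mod 16 = 8" unfolding e by blast
  with m0 show False by simp
qed

end

theorem lemma3:
  fixes m n :: nat
  assumes "\<exists>k. m = 2 ^ k" and "\<exists>k. n = 2 ^ k"
    and "16 \<le> m" and "4 \<le> n" and "m \<le> 4 * n"
  defines "G \<equiv> Gmn m n"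
    and "N \<equiv> generate (Gmn m n) {gen_a m n [^]\<^bsub>Gmn m n\<^esub> (4::nat)}"
  shows "(subgroup N G \<and> (\<forall>\<phi>\<in>iso G G. \<phi> ` N = N))
       \<and> comm_group (G Mod N)
       \<and> \<not> (\<exists>\<alpha>\<in>iso G G. \<forall>g\<in>carrier G. N #>\<^bsub>G\<^esub> \<alpha> g = N #>\<^bsub>G\<^esub> inv\<^bsub>G\<^esub> g)"
proof -
  obtain k1 where k1: "m = 2 ^ k1" using assms(1) by blast
  obtain k2 where k2: "n = 2 ^ k2" using assms(2) by blast
  have "4 \<le> k1"
  proof (rule ccontr)
    assume "\<not> 4 \<le> k1"
    then have "(2::nat) ^ k1 \<le> 2 ^ 3" by (intro power_increasing) simp_all
    then show False using assms(3) k1 by simp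
  qed
  then have m16: "16 dvd m" unfolding k1 using le_imp_power_dvd[of 4 k1 "2::nat"] by simp
  have "2 \<le> k2"
  proof (rule ccontr)
    assume "\<not> 2 \<le> k2"
    then have "(2::nat) ^ k2 \<le> 2 ^ 1" by (intro power_increasing) simp_all
    then show False using assms(4) k2 by simp
  qed
  then have n4: "4 dvd n" unfolding k2 using le_imp_power_dvd[of 2 k2 "2::nat"] by simp
  have np: "0 < n" using assms(4) by simp
  interpret gmn "Gmn m n" m n "gen_a m n" "gen_b m n" "generate (Gmn m n) {gen_a m n [^]\<^bsub>Gmn m n\<^esub> (4::nat)}"
  proof (intro gmn.intro gmn_axioms.intro)
    show "group (Gmn m n)" unfolding Gmn_def by (rule group_pg)
  qed (simp_all add: m16 n4 np)
  show ?thesis unfolding G_def N_def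
    using subN char_N commQ noinv by blast
qed

end
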